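(* Let $\Pi$, $y_n$, $\rho$, $\gamma$ be as in the context and $r>0$. The system of equations \[b_n=y_n-\frac1\gamma+\frac{\rho}{r\gamma}-\frac{1}{\gamma r}\sum_{n'=1}^N\pi_{nn'}e^{\gamma(b_n-b_{n'})},\quad n\in\{1,\dots,N\},\] has a unique solution $(b_1,\dots,b_N)\in\mathbb R^N$. The solution varies continuously with $r>0$, and $\min_n b_n\to\infty$ as $r$ decreases to zero.
   Context: $\Pi=(\pi_{nn'})$ is an $N\times N$ irreducible infinitesimal generator matrix (nonnegative off-diagonal entries, rows summing to zero, and for every nonempty proper subset $\mathcal M\subset\{1,\dots,N\}$ there are $n\in\mathcal M$, $n'\notin\mathcal M$ with $\pi_{nn'}\ne0$). $y_1,\dots,y_N$ are real numbers and $\rho,\gamma>0$. *)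

theory Defs
  imports "HOL-Analysis.Analysis"
begin

text \<open>States are the elements of a finite type 'n (so N = CARD('n) >= 1).
  A generator matrix Pi is a function 'n => 'n => real.\<close>

definition generator :: "('n::finite \<Rightarrow> 'n \<Rightarrow> real) \<Rightarrow> bool" where
  "generator P \<longleftrightarrow> (\<forall>n n'. n \<noteq> n' \<longrightarrow> P n n' \<ge> 0) \<and> (\<forall>n. (\<Sum>n'\<in>UNIV. P n n') = 0)"

definition irreducible_gen :: "('n::finite \<Rightarrow> 'n \<Rightarrow> real) \<Rightarrow> bool" where
  "irreducible_gen P \<longleftrightarrow> generator P \<and>
     (\<forall>M. M \<noteq> {} \<and> M \<noteq> UNIV \<longrightarrow> (\<exists>n\<in>M. \<exists>n'. n' \<notin> M \<and> P n n' \<noteq> 0))"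

definition solves :: "('n::finite \<Rightarrow> 'n \<Rightarrow> real) \<Rightarrow> ('n \<Rightarrow> real) \<Rightarrow> real \<Rightarrow> real \<Rightarrow> real \<Rightarrow> real^'n \<Rightarrow> bool" where
  "solves P y \<rho> \<gamma> r b \<longleftrightarrow> (\<forall>n. b $ n = y n - 1 / \<gamma> + \<rho> / (r * \<gamma>)
      - 1 / (\<gamma> * r) * (\<Sum>n'\<in>UNIV. P n n' * exp (\<gamma> * (b $ n - b $ n'))))"

end

theory Submission imports Defs begin

definition GG :: "('n::finite \<Rightarrow> 'n \<Rightarrow> real) \<Rightarrow> real \<Rightarrow> real^'n \<Rightarrow> 'n \<Rightarrow> real" where
  "GG P \<gamma> b n = (\<Sum>n'\<in>UNIV. P n n' * exp (\<gamma> * (b$n - b$n')))"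

lemma GG_mono:
  fixes P :: "'n::finite \<Rightarrow> 'n \<Rightarrow> real"
  assumes "generator P" "\<gamma> > 0" "\<forall>n'. c$n - c$n' \<le> b$n - b$n'"
  shows "GG P \<gamma> c n \<le> GG P \<gamma> b n"
  unfolding GG_def
proof (rule sum_mono)
  fix n' :: 'n
  show "P n n' * exp (\<gamma> * (c $ n - c $ n')) \<le> P n n' * exp (\<gamma> * (b $ n - b $ n'))"
  proof (cases "n' = n")
    case True then show ?thesis by simp
  next
    case False
    then have "P n n' \<ge> 0" using assms(1) unfolding generator_def by auto
    moreover have "\<gamma> * (c $ n - c $ n') \<le> \<gamma> * (b $ n - b $ n')"
      using assms(2,3) by (simp add: mult_left_mono)
    ultimately show ?thesis by (simp add: mult_left_mono)
  qed
qed

lemma GG_const: "generator P \<Longrightarrow> GG P \<gamma> (\<chi> _. a) n = 0"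
  unfolding GG_def generator_def by simp

lemma GG_max:
  assumes "generator P" "\<gamma> > 0" "\<forall>n'. b$n' \<le> b$n"
  shows "0 \<le> GG P \<gamma> b n"
  using GG_mono[OF assms(1,2), of "\<chi> _. 0" n b] GG_const[OF assms(1), of \<gamma> 0 n] assms(3) by simp

lemma GG_min:
  assumes "generator P" "\<gamma> > 0" "\<forall>n'. b$n \<le> b$n'"
  shows "GG P \<gamma> b n \<le> 0"
  using GG_mono[OF assms(1,2), of b n "\<chi> _. 0"] GG_const[OF assms(1), of \<gamma> 0 n] assms(3) by simp

lemma solves_iff:
  assumes "\<gamma> > 0" "r > 0"
  shows "solves P y \<rho> \<gamma> r b \<longleftrightarrow> (\<forall>n. \<gamma>*r*b$n + GG P \<gamma> b n = \<gamma>*r*y n - r + \<rho>)"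
proof -
  have "b $ n = y n - 1 / \<gamma> + \<rho> / (r * \<gamma>) - 1 / (\<gamma> * r) * GG P \<gamma> b n
     \<longleftrightarrow> \<gamma>*r*b$n + GG P \<gamma> b n = \<gamma>*r*y n - r + \<rho>" for n
  proof -
    have e: "\<gamma>*r*(y n - 1 / \<gamma> + \<rho> / (r * \<gamma>) - 1 / (\<gamma> * r) * GG P \<gamma> b n) = \<gamma>*r*y n - r + \<rho> - GG P \<gamma> b n"
      using assms by (simp add: field_simps)
    have "b $ n = y n - 1 / \<gamma> + \<rho> / (r * \<gamma>) - 1 / (\<gamma> * r) * GG P \<gamma> b n \<longleftrightarrow>
      \<gamma>*r*b $ n = \<gamma>*r*(y n - 1 / \<gamma> + \<rho> / (r * \<gamma>) - 1 / (\<gamma> * r) * GG P \<gamma> b n)"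
      using assms by simp
    then show ?thesis unfolding e by linarith
  qed
  then show ?thesis unfolding solves_def GG_def[symmetric] by simp
qed

lemma ex_argmax: "\<exists>n0. \<forall>n'. (f::'n::finite \<Rightarrow> real) n' \<le> f n0"
proof -
  have "Max (range f) \<in> range f" by (rule Max_in) auto
  then obtain n0 where "Max (range f) = f n0" by blast
  then show ?thesis by (metis Max_ge finite UNIV_I finite_imageI image_eqI)
qed

lemma ex_argmin: "\<exists>n0. \<forall>n'. (f::'n::finite \<Rightarrow> real) n0 \<le> f n'"
  using ex_argmax[of "\<lambda>n. - f n"] by auto

lemma y_le: "\<bar>(y::'n::finite\<Rightarrow>real) n\<bar> \<le> (\<Sum>m\<in>UNIV. \<bar>y m\<bar>)"
  by (rule member_le_sum) auto

lemma upper: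
  assumes "generator P" "\<gamma> > 0" "r > 0" "\<forall>n. \<gamma>*r*b$n + GG P \<gamma> b n \<le> \<gamma>*r*y n - r + \<rho>"
  shows "b$m \<le> (\<Sum>m\<in>UNIV. \<bar>y m\<bar>) - 1/\<gamma> + \<rho>/(\<gamma>*r)"
proof -
  obtain n0 where n0: "\<forall>n'. b$n' \<le> b$n0" using ex_argmax[of "\<lambda>n. b$n"] by auto
  have "0 \<le> GG P \<gamma> b n0" using GG_max[OF assms(1,2) n0] .
  then have "\<gamma>*r*b$n0 \<le> \<gamma>*r*y n0 - r + \<rho>" using assms(4) by smt
  then have "b$n0 \<le> y n0 - 1/\<gamma> + \<rho>/(\<gamma>*r)" using assms(2,3) by (simp add: field_simps)
  moreover have "y n0 \<le> (\<Sum>m\<in>UNIV. \<bar>y m\<bar>)" using y_le[of y n0] by linarith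
  ultimately show ?thesis using n0[rule_format, of m] by linarith
qed

lemma lower:
  assumes "generator P" "\<gamma> > 0" "r > 0" "\<forall>n. \<gamma>*r*b$n + GG P \<gamma> b n \<ge> \<gamma>*r*y n - r + \<rho>"
  shows "b$m \<ge> - (\<Sum>m\<in>UNIV. \<bar>y m\<bar>) - 1/\<gamma> + \<rho>/(\<gamma>*r)"
proof -
  obtain n0 where n0: "\<forall>n'. b$n0 \<le> b$n'" using ex_argmin[of "\<lambda>n. b$n"] by auto
  have "GG P \<gamma> b n0 \<le> 0" using GG_min[OF assms(1,2) n0] .
  then have "\<gamma>*r*b$n0 \<ge> \<gamma>*r*y n0 - r + \<rho>" using assms(4) by smt
  then have "b$n0 \<ge> y n0 - 1/\<gamma> + \<rho>/(\<gamma>*r)" using assms(2,3) by (simp add: field_simps)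
  moreover have "- y n0 \<le> (\<Sum>m\<in>UNIV. \<bar>y m\<bar>)" using y_le[of y n0] by linarith
  ultimately show ?thesis using n0[rule_format, of m] by linarith
qed

lemma compare:
  assumes "generator P" "\<gamma> > 0" "r > 0" "s > 0"
    and b: "\<forall>n. \<gamma>*r*b$n + GG P \<gamma> b n = \<gamma>*r*y n - r + \<rho>"
    and c: "\<forall>n. \<gamma> * s * c$n + GG P \<gamma> c n = \<gamma> * s * y n - s + \<rho>"
    and B: "\<forall>n. \<bar>c$n\<bar> \<le> Bs"
  shows "b$m - c$m \<le> \<bar>r - s\<bar> * (\<gamma> * (\<Sum>m\<in>UNIV. \<bar>y m\<bar>) + 1 + \<gamma> * Bs) / (\<gamma>*r)"
proof -
  define Y where "Y = (\<Sum>m\<in>UNIV. \<bar>y m\<bar>)"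
  obtain n0 where n0: "\<forall>n'. b$n' - c$n' \<le> b$n0 - c$n0" using ex_argmax[of "\<lambda>n. b$n - c$n"] by auto
  have "GG P \<gamma> c n0 \<le> GG P \<gamma> b n0"
    by (rule GG_mono[OF assms(1,2)]) (use n0 in smt)
  then have "\<gamma>*r*b$n0 - \<gamma> * s * c$n0 \<le> (\<gamma>*r*y n0 - r) - (\<gamma> * s * y n0 - s)" using b c by smt
  then have "\<gamma>*r*(b$n0 - c$n0) \<le> (r - s) * (\<gamma>*y n0 - 1 - \<gamma>*c$n0)" by (simp add: algebra_simps)
  also have "\<dots> \<le> \<bar>r - s\<bar> * \<bar>\<gamma>*y n0 - 1 - \<gamma>*c$n0\<bar>"
    by (metis abs_ge_self abs_mult)
  also have "\<dots> \<le> \<bar>r - s\<bar> * (\<gamma> * Y + 1 + \<gamma> * Bs)"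
  proof (rule mult_left_mono)
    have "\<bar>y n0\<bar> \<le> Y" using y_le[of y n0] Y_def by simp
    then have h1: "\<bar>\<gamma>*y n0\<bar> \<le> \<gamma> * Y" using assms(2) by (simp add: abs_mult mult_left_mono)
    have h2: "\<bar>\<gamma>*c$n0\<bar> \<le> \<gamma> * Bs" using assms(2) B by (simp add: abs_mult mult_left_mono)
    show "\<bar>\<gamma>*y n0 - 1 - \<gamma>*c$n0\<bar> \<le> \<gamma> * Y + 1 + \<gamma> * Bs"
      using h1 h2 by linarith
  qed simp
  finally have "b$n0 - c$n0 \<le> \<bar>r - s\<bar> * (\<gamma> * Y + 1 + \<gamma> * Bs) / (\<gamma>*r)"
    using assms(2,3) by (simp add: field_simps)
  then show ?thesis using n0[rule_format, of m] unfolding Y_def by linarith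
qed

lemma existence:
  fixes P :: "'n::finite \<Rightarrow> 'n \<Rightarrow> real"
  assumes gen: "generator P" and g: "\<gamma> > 0" and r: "r > 0"
  shows "\<exists>b::real^'n. \<forall>n. \<gamma>*r*b$n + GG P \<gamma> b n = \<gamma>*r*y n - r + \<rho>"
proof -
  define Y where "Y = (\<Sum>m\<in>UNIV. \<bar>y m\<bar>)"
  define L where "L = - Y - 1/\<gamma> + \<rho>/(\<gamma>*r)"
  define U where "U = Y - 1/\<gamma> + \<rho>/(\<gamma>*r)"
  define F where "F n b = \<gamma>*r*b$n + GG P \<gamma> b n - (\<gamma>*r*y n - r + \<rho>)" for n and b :: "real^'n"
  have contF: "continuous_on UNIV (F n)" for n unfolding F_def GG_def by (intro continuous_intros)
  define S where "S = {b. (\<forall>n. F n b \<le> 0) \<and> (\<forall>n. L \<le> b$n)}"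
  have S_eq: "S = (\<Inter>n. {b. F n b \<le> 0}) \<inter> (\<Inter>n. {b. L \<le> b$n})" unfolding S_def by auto
  have "closed S" unfolding S_eq
    by (intro closed_Int closed_INT ballI closed_Collect_le contF continuous_intros)
  moreover have "bounded S"
    unfolding bounded_iff
  proof (intro exI ballI)
    fix b assume "b \<in> S"
    then have bl: "\<forall>i. L \<le> b$i" and bu: "\<forall>i. b$i \<le> U"
      using upper[OF gen g r, of b y \<rho>] unfolding S_def F_def U_def Y_def by auto
    have "norm b \<le> (\<Sum>i\<in>UNIV. \<bar>b$i\<bar>)" by (rule norm_le_l1_cart)
    also have "\<dots> \<le> of_nat (card (UNIV::'n set)) * (\<bar>L\<bar> + \<bar>U\<bar>)"
      by (rule sum_bounded_above) (use bl bu in smt)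
    finally show "norm b \<le> of_nat (card (UNIV::'n set)) * (\<bar>L\<bar> + \<bar>U\<bar>)" .
  qed
  ultimately have "compact S" by (simp add: compact_eq_bounded_closed)
  moreover have "(\<chi> _. L) \<in> S"
  proof -
    have "F n (\<chi> _. L) \<le> 0" for n
    proof -
      have "- Y \<le> y n" using y_le[of y n] unfolding Y_def by linarith
      then have "\<gamma>*r*(-Y) \<le> \<gamma>*r*y n" using g r by (intro mult_left_mono) auto
      moreover have "\<gamma>*r*L = \<gamma>*r*(-Y) - r + \<rho>" unfolding L_def using g r by (simp add: field_simps)
      ultimately show ?thesis unfolding F_def using GG_const[OF gen, of \<gamma> L n] by simp
    qed
    then show ?thesis unfolding S_def by simp
  qed
  then have "S \<noteq> {}" by auto
  moreover have "continuous_on S (\<lambda>b::real^'n. \<Sum>i\<in>UNIV. b$i)" by (intro continuous_intros)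
  ultimately obtain bs where bs: "bs \<in> S" and bmax: "\<forall>b\<in>S. (\<Sum>i\<in>UNIV. b$i) \<le> (\<Sum>i\<in>UNIV. bs$i)"
    using continuous_attains_sup by blast
  have "F n bs = 0" for n
  proof (rule ccontr)
    assume "F n bs \<noteq> 0"
    moreover have "F n bs \<le> 0" using bs unfolding S_def by blast
    ultimately have neg: "F n bs < 0" by linarith
    define v where "v t = (\<chi> m. if m = n then bs$m + t else bs$m)" for t :: real
    have cc: "continuous_on UNIV (\<lambda>x. if m = n then bs $ m + x else bs $ m)" for m
      by (cases "m = n") (auto intro!: continuous_intros)
    have "continuous_on UNIV (\<lambda>t. F n (v t))"
      unfolding v_def F_def GG_def by (intro continuous_intros cc)
    then have "isCont (\<lambda>t. F n (v t)) 0" by (simp add: continuous_on_eq_continuous_at)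
    moreover have "v 0 = bs" unfolding v_def by (simp add: vec_eq_iff)
    ultimately obtain d where d: "d > 0" "\<forall>t. dist t 0 < d \<longrightarrow> dist (F n (v t)) (F n bs) < - F n bs"
      using neg unfolding continuous_at_eps_delta by (metis neg_0_less_iff_less)
    define t where "t = d/2"
    have t: "t > 0" "dist t 0 < d" using d unfolding t_def by auto
    have Fv: "F n (v t) < 0" using d(2) t(2) unfolding dist_real_def by force
    have "v t \<in> S"
      unfolding S_def
    proof (intro CollectI conjI allI)
      fix m
      show "L \<le> v t $ m" using bs t unfolding S_def v_def by (auto simp: add_increasing2)
      show "F m (v t) \<le> 0"
      proof (cases "m = n")
        case True then show ?thesis using Fv by simp
      next
        case False
        have "GG P \<gamma> (v t) m \<le> GG P \<gamma> bs m"
          by (rule GG_mono[OF gen g]) (use False t in \<open>auto simp: v_def\<close>)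
        then have "F m (v t) \<le> F m bs" unfolding F_def using False by (simp add: v_def)
        moreover have "F m bs \<le> 0" using bs unfolding S_def by blast
        ultimately show ?thesis by linarith
      qed
    qed
    then have "(\<Sum>i\<in>UNIV. v t $ i) \<le> (\<Sum>i\<in>UNIV. bs$i)" using bmax by blast
    moreover have "(\<Sum>i\<in>UNIV. v t $ i) = (\<Sum>i\<in>UNIV. bs$i) + t"
    proof -
      have "(\<Sum>i\<in>UNIV. v t $ i) = (\<Sum>i\<in>UNIV. bs$i + (if i = n then t else 0))"
        unfolding v_def by (intro sum.cong) auto
      also have "\<dots> = (\<Sum>i\<in>UNIV. bs$i) + t" by (simp add: sum.distrib)
      finally show ?thesis .
    qed
    ultimately show False using t by linarith
  qed
  then show ?thesis unfolding F_def by (intro exI[of _ bs]) auto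
qed

lemma absbound:
  assumes "generator P" "\<gamma> > 0" "r > 0" "\<rho> > 0" "\<forall>n. \<gamma>*r*b$n + GG P \<gamma> b n = \<gamma>*r*y n - r + \<rho>"
  shows "\<bar>b$m\<bar> \<le> (\<Sum>m\<in>UNIV. \<bar>y m\<bar>) + 1/\<gamma> + \<rho>/(\<gamma>*r)"
proof -
  have "b$m \<le> (\<Sum>m\<in>UNIV. \<bar>y m\<bar>) - 1/\<gamma> + \<rho>/(\<gamma>*r)" using upper[OF assms(1-3), of b y \<rho>] assms(5) by simp
  moreover have "b$m \<ge> - (\<Sum>m\<in>UNIV. \<bar>y m\<bar>) - 1/\<gamma> + \<rho>/(\<gamma>*r)" using lower[OF assms(1-3), of y \<rho> b] assms(5) by simp
  moreover have "1/\<gamma> > 0" "\<rho>/(\<gamma>*r) > 0" using assms by auto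
  ultimately show ?thesis by linarith
qed

definition Dc :: "('n::finite \<Rightarrow> real) \<Rightarrow> real \<Rightarrow> real \<Rightarrow> real \<Rightarrow> real \<Rightarrow> real" where
  "Dc y \<rho> \<gamma> r s = (\<gamma> * (\<Sum>m\<in>UNIV. \<bar>y m\<bar>) + 1 + \<gamma> * ((\<Sum>m\<in>UNIV. \<bar>y m\<bar>) + 1/\<gamma> + \<rho>/(\<gamma> * s))) / (\<gamma>*r)"

lemma compare2:
  assumes "generator P" "\<gamma> > 0" "r > 0" "s > 0" "\<rho> > 0"
    and b: "\<forall>n. \<gamma>*r*b$n + GG P \<gamma> b n = \<gamma>*r*y n - r + \<rho>"
    and c: "\<forall>n. \<gamma> * s * c$n + GG P \<gamma> c n = \<gamma> * s * y n - s + \<rho>"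
  shows "\<bar>b$m - c$m\<bar> \<le> \<bar>r - s\<bar> * (Dc y \<rho> \<gamma> r s + Dc y \<rho> \<gamma> s r)"
proof -
  have "b$m - c$m \<le> \<bar>r - s\<bar> * Dc y \<rho> \<gamma> r s"
    using compare[OF assms(1-4) b c, of "(\<Sum>m\<in>UNIV. \<bar>y m\<bar>) + 1/\<gamma> + \<rho>/(\<gamma> * s)" m]
      absbound[OF assms(1,2,4,5) c] unfolding Dc_def by (simp add: mult.assoc)
  moreover have "c$m - b$m \<le> \<bar>s - r\<bar> * Dc y \<rho> \<gamma> s r"
    using compare[OF assms(1,2,4,3) c b, of "(\<Sum>m\<in>UNIV. \<bar>y m\<bar>) + 1/\<gamma> + \<rho>/(\<gamma>*r)" m]
      absbound[OF assms(1,2,3,5) b] unfolding Dc_def by (simp add: mult.assoc)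
  moreover have "Dc y \<rho> \<gamma> r s \<ge> 0" "Dc y \<rho> \<gamma> s r \<ge> 0"
    using assms(2-5) unfolding Dc_def by (auto intro!: divide_nonneg_pos add_nonneg_nonneg sum_nonneg)
  ultimately show ?thesis by (smt (verit) abs_minus_commute mult_left_mono abs_ge_zero distrib_left)
qed

theorem lemma2:
  fixes P :: "'n::finite \<Rightarrow> 'n \<Rightarrow> real" and y :: "'n \<Rightarrow> real" and \<rho> \<gamma> :: real
  assumes "irreducible_gen P" and "\<rho> > 0" and "\<gamma> > 0"
  shows "(\<forall>r>0. \<exists>!b. solves P y \<rho> \<gamma> r b)
    \<and> continuous_on {0<..} (\<lambda>r. THE b. solves P y \<rho> \<gamma> r b)
    \<and> filterlim (\<lambda>r. Min (range (\<lambda>n. (THE b. solves P y \<rho> \<gamma> r b) $ n))) at_top (at_right 0)"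
proof -
  have gen: "generator P" using assms(1) unfolding irreducible_gen_def by simp
  note g = assms(3) and rho = assms(2)
  define sol where "sol r = (THE b. solves P y \<rho> \<gamma> r b)" for r
  have uniq: "\<exists>!b. solves P y \<rho> \<gamma> r b" if r: "r > 0" for r
  proof -
    obtain b where b: "\<forall>n. \<gamma>*r*b$n + GG P \<gamma> b n = \<gamma>*r*y n - r + \<rho>"
      using existence[OF gen g r] by blast
    show ?thesis
    proof (rule ex1I)
      show "solves P y \<rho> \<gamma> r b" using b solves_iff[OF g r] by blast
      fix c assume "solves P y \<rho> \<gamma> r c"
      then have c: "\<forall>n. \<gamma>*r*c$n + GG P \<gamma> c n = \<gamma>*r*y n - r + \<rho>" using solves_iff[OF g r] by blast
      have "\<bar>c$m - b$m\<bar> \<le> 0" for m using compare2[OF gen g r r rho c b, of m] by simp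
      then show "c = b" by (simp add: vec_eq_iff)
    qed
  qed
  have solI: "\<forall>n. \<gamma>*r * (sol r $ n) + GG P \<gamma> (sol r) n = \<gamma>*r*y n - r + \<rho>" if r: "r > 0" for r
    using theI'[OF uniq[OF r]] solves_iff[OF g r] unfolding sol_def by blast
  have cont: "continuous_on {0<..} sol"
    unfolding continuous_on_eq_continuous_within
  proof
    fix r0 :: real assume "r0 \<in> {0<..}"
    then have r0: "r0 > 0" by simp
    define h where "h s = of_nat CARD('n) * (\<bar>s - r0\<bar> * (Dc y \<rho> \<gamma> s r0 + Dc y \<rho> \<gamma> r0 s))" for s
    have "(h \<longlongrightarrow> h r0) (at r0 within {0<..})"
      unfolding h_def Dc_def using r0 g by (intro tendsto_intros) auto
    then have h0: "(h \<longlongrightarrow> 0) (at r0 within {0<..})" unfolding h_def by simp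
    have ev: "\<forall>\<^sub>F s in at r0 within {0<..}. norm (sol s - sol r0) \<le> h s"
      unfolding eventually_at_filter
    proof (intro always_eventually allI impI)
      fix s :: real assume "s \<noteq> r0" "s \<in> {0<..}"
      then have s: "s > 0" by simp
      have "norm (sol s - sol r0) \<le> (\<Sum>i\<in>UNIV. \<bar>(sol s - sol r0)$i\<bar>)" by (rule norm_le_l1_cart)
      also have "\<dots> \<le> of_nat (card (UNIV::'n set)) * (\<bar>s - r0\<bar> * (Dc y \<rho> \<gamma> s r0 + Dc y \<rho> \<gamma> r0 s))"
        by (rule sum_bounded_above) (use compare2[OF gen g s r0 rho solI[OF s] solI[OF r0]] in simp)
      finally show "norm (sol s - sol r0) \<le> h s" unfolding h_def by simp
    qed
    have "((\<lambda>s. sol s - sol r0) \<longlongrightarrow> 0) (at r0 within {0<..})"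
      by (rule Lim_null_comparison[OF ev h0])
    then show "continuous (at r0 within {0<..}) sol"
      unfolding continuous_within by (simp add: LIM_zero_iff)
  qed
  have lim: "filterlim (\<lambda>r. Min (range (\<lambda>n. sol r $ n))) at_top (at_right 0)"
  proof (rule filterlim_at_top_mono)
    define Y where "Y = (\<Sum>m\<in>UNIV. \<bar>y m\<bar>)"
    have "filterlim (\<lambda>r. (\<rho>/\<gamma>) * inverse r) at_top (at_right 0)"
      by (rule filterlim_tendsto_pos_mult_at_top[OF tendsto_const _ filterlim_inverse_at_top_right])
        (use g rho in simp)
    then have "filterlim (\<lambda>r. (- Y - 1/\<gamma>) + (\<rho>/\<gamma>) * inverse r) at_top (at_right 0)"
      by (rule filterlim_tendsto_add_at_top[OF tendsto_const])
    then show "filterlim (\<lambda>r. - Y - 1/\<gamma> + \<rho>/(\<gamma>*r)) at_top (at_right 0)"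
      by (simp add: field_simps)
    show "\<forall>\<^sub>F r in at_right 0. - Y - 1/\<gamma> + \<rho>/(\<gamma>*r) \<le> Min (range (\<lambda>n. sol r $ n))"
      unfolding eventually_at_filter
    proof (intro always_eventually allI impI)
      fix r :: real assume "r \<noteq> 0" "r \<in> {0<..}"
      then have r: "r > 0" by simp
      show "- Y - 1/\<gamma> + \<rho>/(\<gamma>*r) \<le> Min (range (\<lambda>n. sol r $ n))"
        using lower[OF gen g r, of y \<rho> "sol r"] solI[OF r] unfolding Y_def
        by (subst Min_ge_iff) auto
    qed
  qed
  show ?thesis using uniq cont lim unfolding sol_def by blast
qed

end
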